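(* Let $d>1$, $r>0$, and let $\mathbf{A}\subset\mathbb{E}^d$ be an $r$-ball body, i.e. $\mathbf{A}=X^r$ for some nonempty $X\subseteq\mathbb{E}^d$. Let $0<R<r$ and $\mathbf{B}=\mathbf{B}^d[\mathbf{o},r-R]$ with $V_d(\mathbf{A})=V_d(\mathbf{B})$; then $\mathbf{B}^r=\mathbf{B}^d[\mathbf{o},R]$ and $$V_1(\mathbf{A})+V_1(\mathbf{A}^r)=\frac{d\,\omega_d}{\omega_{d-1}}\,r=V_1(\mathbf{B})+V_1(\mathbf{B}^r).$$
   Context: $\mathbf{B}^d[\mathbf{p},r]=\{\mathbf{q}\in\mathbb{E}^d : |\mathbf{p}-\mathbf{q}|\le r\}$ and $\mathbf{o}$ is the origin. For a nonempty set $X\subseteq\mathbb{E}^d$ and $r>0$, $X^r:=\bigcap_{\mathbf{x}\in X}\mathbf{B}^d[\mathbf{x},r]$. $V_k$ denotes the $k$-th intrinsic volume ($V_d$ is volume, $V_1$ is the first intrinsic volume). $\omega_d=\pi^{d/2}/\Gamma(1+d/2)$ is the volume of the $d$-dimensional unit ball. *)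

theory Defs
  imports "HOL-Analysis.Analysis"
begin

definition ball_dual :: "real \<Rightarrow> 'a::euclidean_space set \<Rightarrow> 'a set" where
  "ball_dual r X = (\<Inter>x\<in>X. cball x r)"

definition omega :: "nat \<Rightarrow> real" where
  "omega d = pi powr (real d / 2) / Gamma (1 + real d / 2)"

definition vol :: "'a::euclidean_space set \<Rightarrow> real" where
  "vol K = measure lebesgue K"

definition parallel_body :: "'a::euclidean_space set \<Rightarrow> real \<Rightarrow> 'a set" where
  "parallel_body K t = {x + y | x y. x \<in> K \<and> y \<in> cball 0 t}"

text \<open>First intrinsic volume, via the Steiner formula
  vol(K + tB) = omega_d t^d + omega_{d-1} V_1(K) t^{d-1} + (lower order terms):
  V_1(K) is the coefficient of t^{d-1} divided by omega_{d-1}.\<close>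
definition V1 :: "'a::euclidean_space set \<Rightarrow> real" where
  "V1 K = lim (\<lambda>n::nat. (vol (parallel_body K (real n))
              - omega DIM('a) * real n ^ DIM('a))
             / (omega (DIM('a) - 1) * real n ^ (DIM('a) - 1)))"

end

theory Submission
  imports Defs
begin

lemma ball_dual_cball1:
  fixes r \<rho> :: real
  shows "cball 0 (r - \<rho>) \<subseteq> ball_dual r (cball (0::'a::euclidean_space) \<rho>)"
proof (rule subsetI)
  fix x :: 'a assume "x \<in> cball 0 (r - \<rho>)"
  then have nx: "norm x \<le> r - \<rho>" by simp
  have "x \<in> cball y r" if "y \<in> cball 0 \<rho>" for y
    using norm_triangle_ineq4[of y x] that nx by (simp add: dist_norm)
  then show "x \<in> ball_dual r (cball 0 \<rho>)" unfolding ball_dual_def by blast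
qed

lemma ball_dual_cball2:
  fixes r \<rho> :: real
  assumes "0 \<le> \<rho>" "\<rho> \<le> r"
  shows "ball_dual r (cball (0::'a::euclidean_space) \<rho>) \<subseteq> cball 0 (r - \<rho>)"
  proof (rule subsetI)
    fix x :: 'a assume x: "x \<in> ball_dual r (cball 0 \<rho>)"
    show "x \<in> cball 0 (r - \<rho>)"
    proof (rule ccontr)
      assume "x \<notin> cball 0 (r - \<rho>)"
      then have nx: "norm x > r - \<rho>" by simp
      then have "x \<noteq> 0" using assms by auto
      define b where "b = - (\<rho> / norm x) *\<^sub>R x"
      have "norm b = \<rho>" using \<open>x \<noteq> 0\<close> assms by (simp add: b_def)
      then have "x \<in> cball b r" using x unfolding ball_dual_def by auto
      moreover have "x - b = (1 + \<rho> / norm x) *\<^sub>R x" by (simp add: b_def algebra_simps)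
      then have "norm (x - b) = (1 + \<rho> / norm x) * norm x"
        using assms by (simp add: abs_of_nonneg)
      then have "norm (x - b) = norm x + \<rho>" using \<open>x \<noteq> 0\<close> by (simp add: distrib_right)
      moreover have "True" by simp
      ultimately show False using nx by (simp add: dist_norm norm_minus_commute)
    qed
  qed

lemma ball_dual_cball:
  fixes r \<rho> :: real
  assumes "0 \<le> \<rho>" "\<rho> \<le> r"
  shows "ball_dual r (cball (0::'a::euclidean_space) \<rho>) = cball 0 (r - \<rho>)"
  using ball_dual_cball1[of r \<rho>] ball_dual_cball2[OF assms] by blast

lemma ball_dual_closed: "closed (ball_dual r X)"
  unfolding ball_dual_def by (auto intro: closed_INT)

lemma ball_dual_bounded: "X \<noteq> {} \<Longrightarrow> bounded (ball_dual r X)"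
  unfolding ball_dual_def by (meson INT_lower bounded_cball bounded_subset ex_in_conv)

lemma ball_dual_compact: "X \<noteq> {} \<Longrightarrow> compact (ball_dual r X)"
  by (simp add: ball_dual_bounded ball_dual_closed compact_eq_bounded_closed)

lemma ball_dual_sub: "X \<subseteq> ball_dual r (ball_dual r X)"
  unfolding ball_dual_def by (auto simp: dist_commute)

definition hsupp :: "'a::euclidean_space set \<Rightarrow> 'a \<Rightarrow> real" where
  "hsupp K u = Sup ((\<lambda>k. k \<bullet> u) ` K)"

lemma hsupp_attained:
  assumes "compact K" "K \<noteq> {}"
  obtains p where "p \<in> K" "hsupp K u = p \<bullet> u" "\<And>k. k \<in> K \<Longrightarrow> k \<bullet> u \<le> p \<bullet> u"
proof -
  have "continuous_on K (\<lambda>k. k \<bullet> u)" by (intro continuous_intros)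
  from continuous_attains_sup[OF assms this] obtain p where p: "p \<in> K" "\<And>k. k \<in> K \<Longrightarrow> k \<bullet> u \<le> p \<bullet> u"
    by blast
  have "hsupp K u = p \<bullet> u" unfolding hsupp_def
    by (rule cSup_eq_maximum) (use p in auto)
  then show ?thesis using p that by blast
qed

lemma hsupp_upper: "compact K \<Longrightarrow> k \<in> K \<Longrightarrow> k \<bullet> u \<le> hsupp K u"
  by (metis empty_iff hsupp_attained)

lemma norm_comb_sq:
  fixes P v :: "'a::real_inner"
  shows "(norm (P + e *\<^sub>R v))\<^sup>2 = (1 - e) * (norm P)\<^sup>2 + e * (norm (P + v))\<^sup>2 - e * (1 - e) * (norm v)\<^sup>2"
  by (simp add: power2_norm_eq_inner inner_add_left inner_add_right inner_commute algebra_simps)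

lemma norm_add_sq:
  fixes x y :: "'a::real_inner"
  shows "(norm (x + y))\<^sup>2 = (norm x)\<^sup>2 + 2 * (x \<bullet> y) + (norm y)\<^sup>2"
  by (simp add: power2_norm_eq_inner inner_add_left inner_add_right inner_commute)

lemma support_ball:
  fixes X :: "'a::euclidean_space set"
  assumes r: "r > 0" and u: "norm u = 1" and p: "p \<in> ball_dual r X"
    and pmax: "\<And>q. q \<in> ball_dual r X \<Longrightarrow> q \<bullet> u \<le> p \<bullet> u" and a: "a \<in> ball_dual r X"
  shows "dist a (p - r *\<^sub>R u) \<le> r"
proof (rule ccontr)
  assume "\<not> dist a (p - r *\<^sub>R u) \<le> r"
  then have far: "(norm (a - p + r *\<^sub>R u))\<^sup>2 > r\<^sup>2"
    by (simp add: dist_norm algebra_simps power_strict_mono r less_imp_le)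
  define v where "v = a - p"
  define D2 where "D2 = (norm v)\<^sup>2"
  define g where "g = - (v \<bullet> u)"
  have "a - p + r *\<^sub>R u = v + r *\<^sub>R u" by (simp add: v_def)
  then have "(norm (a - p + r *\<^sub>R u))\<^sup>2 = D2 + 2 * r * (v \<bullet> u) + r\<^sup>2"
    using u r unfolding D2_def by (simp add: norm_add_sq)
  with far have key: "D2 + 2 * r * (v \<bullet> u) > 0" by simp
  have D2pos: "D2 > 0"
  proof -
    have "v \<noteq> 0"
    proof
      assume "v = 0"
      then show False using key by (simp add: D2_def)
    qed
    then show ?thesis unfolding D2_def by simp
  qed
  define \<delta> where "\<delta> = D2 / (2 * r) - g"
  have \<delta>pos: "\<delta> > 0" using key r unfolding \<delta>_def g_def by (simp add: field_simps)
  define \<gamma> where "\<gamma> = D2 / (2 * r) - min \<delta> (D2 / (2 * r)) / 2"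
  have h2: "D2 / (2 * r) > 0" using D2pos r by simp
  have \<gamma>1: "\<gamma> > g"
  proof (cases "\<delta> \<le> D2 / (2 * r)")
    case True
    then have "\<gamma> = D2 / (2 * r) - \<delta> / 2" by (simp add: \<gamma>_def min_def)
    then show ?thesis using \<delta>pos unfolding \<delta>_def by (simp add: field_simps)
  next
    case False
    then have "\<gamma> = D2 / (2 * r) - D2 / (2 * r) / 2" by (simp add: \<gamma>_def min_def)
    then show ?thesis using False h2 unfolding \<delta>_def by (simp add: field_simps)
  qed
  have \<gamma>2: "\<gamma> \<ge> D2 / (4 * r)" unfolding \<gamma>_def using r D2pos by (auto simp: min_def field_simps)
  have \<gamma>3: "\<gamma> < D2 / (2 * r)" unfolding \<gamma>_def using r D2pos \<delta>pos by (auto simp: min_def)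
  have "D2 / (4 * r) > 0" using D2pos r by simp
  then have \<gamma>pos: "\<gamma> > 0" using \<gamma>2 by linarith
  define \<eta> where "\<eta> = (D2 - 2 * r * \<gamma>) / (\<gamma>\<^sup>2 + D2)"
  have num: "D2 - 2 * r * \<gamma> > 0" using \<gamma>3 r by (simp add: field_simps)
  have den: "\<gamma>\<^sup>2 + D2 > 0" using D2pos by (simp add: add_nonneg_pos)
  have \<eta>pos: "\<eta> > 0" unfolding \<eta>_def using num den by (rule divide_pos_pos)
  have "0 \<le> 2 * r * \<gamma>" using \<gamma>pos r by simp
  moreover have "0 \<le> \<gamma>\<^sup>2" by simp
  ultimately have "D2 - 2 * r * \<gamma> \<le> \<gamma>\<^sup>2 + D2" by linarith
  then have \<eta>le: "\<eta> \<le> 1" unfolding \<eta>_def using den by simp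
  have \<eta>eq: "\<eta> * (\<gamma>\<^sup>2 + D2) = D2 - 2 * r * \<gamma>" unfolding \<eta>_def using den by simp
  define q where "q = p + \<eta> *\<^sub>R v + (\<eta> * \<gamma>) *\<^sub>R u"
  have "q \<in> ball_dual r X"
    unfolding ball_dual_def
  proof (intro INT_I)
    fix x assume x: "x \<in> X"
    define P where "P = p - x"
    have "dist x p \<le> r" using p x unfolding ball_dual_def by auto
    then have P: "norm P \<le> r" unfolding P_def by (simp add: dist_norm norm_minus_commute)
    have "dist x a \<le> r" using a x unfolding ball_dual_def by auto
    moreover have "P + v = a - x" unfolding P_def v_def by simp
    ultimately have A: "norm (P + v) \<le> r" by (simp add: dist_norm norm_minus_commute)
    have m2: "(norm (P + \<eta> *\<^sub>R v))\<^sup>2 \<le> r\<^sup>2 - \<eta> * (1 - \<eta>) * D2"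
    proof -
      have "(norm P)\<^sup>2 \<le> r\<^sup>2" "(norm (P + v))\<^sup>2 \<le> r\<^sup>2"
        using P A by (simp_all add: power_mono)
      then have "(1 - \<eta>) * (norm P)\<^sup>2 + \<eta> * (norm (P + v))\<^sup>2 \<le> (1 - \<eta>) * r\<^sup>2 + \<eta> * r\<^sup>2"
        using \<eta>pos \<eta>le by (intro add_mono mult_left_mono) auto
      then show ?thesis unfolding norm_comb_sq D2_def by (simp add: algebra_simps)
    qed
    have "\<eta> * (1 - \<eta>) * D2 \<ge> 0" using \<eta>pos \<eta>le D2pos by simp
    then have "(norm (P + \<eta> *\<^sub>R v))\<^sup>2 \<le> r\<^sup>2" using m2 by simp
    then have mr: "norm (P + \<eta> *\<^sub>R v) \<le> r" using r by (simp add: power2_le_iff_abs_le)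
    have cs: "u \<bullet> (P + \<eta> *\<^sub>R v) \<le> r"
      using Cauchy_Schwarz_ineq2[of u "P + \<eta> *\<^sub>R v"] u mr by simp
    have qx: "q - x = (P + \<eta> *\<^sub>R v) + (\<eta> * \<gamma>) *\<^sub>R u" unfolding q_def P_def by (simp add: algebra_simps)
    have "(norm (q - x))\<^sup>2 = (norm (P + \<eta> *\<^sub>R v))\<^sup>2 + 2 * (\<eta> * \<gamma>) * (u \<bullet> (P + \<eta> *\<^sub>R v)) + (\<eta> * \<gamma>)\<^sup>2"
      unfolding qx norm_add_sq using u by (simp add: inner_commute power_mult_distrib)
    also have "\<dots> \<le> r\<^sup>2 - \<eta> * (1 - \<eta>) * D2 + 2 * (\<eta> * \<gamma>) * r + (\<eta> * \<gamma>)\<^sup>2"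
      using m2 cs \<eta>pos \<gamma>pos by (intro add_mono mult_left_mono) auto
    also have "\<dots> = r\<^sup>2 - \<eta> * (D2 - 2 * r * \<gamma> - \<eta> * (\<gamma>\<^sup>2 + D2))"
      by (simp add: algebra_simps power2_eq_square)
    also have "\<dots> = r\<^sup>2" using \<eta>eq by simp
    finally have "(norm (q - x))\<^sup>2 \<le> r\<^sup>2" .
    then have "norm (q - x) \<le> r" using r by (simp add: power2_le_iff_abs_le)
    then show "q \<in> cball x r" by (simp add: dist_norm norm_minus_commute)
  qed
  then have "q \<bullet> u \<le> p \<bullet> u" by (rule pmax)
  moreover have "q \<bullet> u = p \<bullet> u + \<eta> * (\<gamma> - g)"
    unfolding q_def g_def using u by (simp add: inner_add_left algebra_simps power2_norm_eq_inner[symmetric])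
  moreover have "\<eta> * (\<gamma> - g) > 0" using \<eta>pos \<gamma>1 by simp
  ultimately show False by simp
qed


lemma hsupp_dual:
  fixes X :: "'a::euclidean_space set"
  assumes r: "r > 0" and X: "X \<noteq> {}" and A: "A = ball_dual r X" "A \<noteq> {}" and u: "norm u = 1"
  shows "hsupp A u + hsupp (ball_dual r A) (- u) = r"
proof -
  have cA: "compact A" using A X by (simp add: ball_dual_compact)
  have cAr: "compact (ball_dual r A)" using A by (simp add: ball_dual_compact)
  have Arne: "ball_dual r A \<noteq> {}" using ball_dual_sub[of X r] X A by auto
  obtain p where p: "p \<in> A" "hsupp A u = p \<bullet> u" "\<And>k. k \<in> A \<Longrightarrow> k \<bullet> u \<le> p \<bullet> u"
    using hsupp_attained[OF cA A(2)] by blast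
  obtain c where c: "c \<in> ball_dual r A" "hsupp (ball_dual r A) (-u) = c \<bullet> (-u)"
    using hsupp_attained[OF cAr Arne] by blast
  have "dist c p \<le> r" using c(1) p(1) unfolding ball_dual_def by (auto simp: dist_commute)
  then have "(p - c) \<bullet> u \<le> r"
    using Cauchy_Schwarz_ineq2[of "p - c" u] u by (simp add: dist_norm norm_minus_commute)
  then have le: "hsupp A u + hsupp (ball_dual r A) (- u) \<le> r"
    using p c by (simp add: inner_diff_left)
  have "p - r *\<^sub>R u \<in> ball_dual r A"
    unfolding ball_dual_def
  proof (intro INT_I)
    fix a assume "a \<in> A"
    then have "dist a (p - r *\<^sub>R u) \<le> r"
      using support_ball[OF r u, of p X a] p A by auto
    then show "p - r *\<^sub>R u \<in> cball a r" by simp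
  qed
  then have "(p - r *\<^sub>R u) \<bullet> (-u) \<le> hsupp (ball_dual r A) (-u)"
    by (rule hsupp_upper[OF cAr])
  moreover have "(p - r *\<^sub>R u) \<bullet> (-u) = r - p \<bullet> u"
    using u by (simp add: inner_diff_left power2_norm_eq_inner[symmetric])
  ultimately show ?thesis using le p by simp
qed

lemma cone_scale:
  fixes C :: "'a::euclidean_space set"
  assumes hom: "\<And>x s. x \<in> C \<Longrightarrow> s > 0 \<Longrightarrow> s *\<^sub>R x \<in> C" and a: "a \<ge> 0"
  shows "measure lebesgue (C \<inter> cball 0 a) = a ^ DIM('a) * measure lebesgue (C \<inter> cball 0 1)"
proof (cases "a = 0")
  case True
  have "C \<inter> cball 0 a \<subseteq> {0}" using True by auto
  then have "measure lebesgue (C \<inter> cball 0 a) = 0"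
    by (meson negligible_imp_measure0 negligible_sing negligible_subset)
  then show ?thesis using True by simp
next
  case False
  then have a: "a > 0" using a by simp
  have "C \<inter> cball 0 a = (\<lambda>x. a *\<^sub>R x + 0) ` (C \<inter> cball 0 1)"
  proof (rule set_eqI, rule iffI)
    fix y assume y: "y \<in> C \<inter> cball 0 a"
    have "(1/a) *\<^sub>R y \<in> C \<inter> cball 0 1" using y a hom[of y "1/a"] by (auto simp: field_simps)
    moreover have "y = a *\<^sub>R ((1/a) *\<^sub>R y) + 0" using a by simp
    ultimately show "y \<in> (\<lambda>x. a *\<^sub>R x + 0) ` (C \<inter> cball 0 1)" by blast
  next
    fix y assume "y \<in> (\<lambda>x. a *\<^sub>R x + 0) ` (C \<inter> cball 0 1)"
    then obtain x where x: "x \<in> C" "norm x \<le> 1" "y = a *\<^sub>R x" by auto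
    then show "y \<in> C \<inter> cball 0 a" using a hom[of x a] by (auto simp: mult_left_le)
  qed
  then show ?thesis using measure_lebesgue_affine[of a 0 "C \<inter> cball 0 1"] a by simp
qed

lemma fm_integrable: "A \<in> fmeasurable M \<Longrightarrow> integrable M (indicator A :: _ \<Rightarrow> real)"
  by (rule integrable_real_indicator) (auto simp: fmeasurable_def)

lemma fm_emeasure: "A \<in> fmeasurable M \<Longrightarrow> emeasure M A < \<infinity>"
  by (auto simp: fmeasurable_def)

lemma polar_step:
  fixes G :: "'a::euclidean_space \<Rightarrow> real"
  assumes fin: "finite V" and GV: "\<And>x. G x \<in> V" and nonneg: "\<And>v. v \<in> V \<Longrightarrow> 0 \<le> v"
    and meas[measurable]: "G \<in> borel_measurable lebesgue" and hom: "\<And>x s. s > 0 \<Longrightarrow> G (s *\<^sub>R x) = G x"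
  shows "measure lebesgue {x. norm x \<le> G x} = (\<integral>x. indicator (cball 0 1) x * G x ^ DIM('a) \<partial>lebesgue)"
proof -
  define C where "C v = {x. G x = v}" for v
  have Cs[measurable]: "C v \<in> sets lebesgue" for v
  proof -
    have "{x \<in> space lebesgue. G x = v} \<in> sets lebesgue" by measurable
    then show ?thesis by (simp add: C_def)
  qed
  have Chom: "x \<in> C v \<Longrightarrow> s > 0 \<Longrightarrow> s *\<^sub>R x \<in> C v" for x s v
    using hom by (simp add: C_def)
  have fm: "C v \<inter> cball 0 a \<in> fmeasurable lebesgue" for v a
    using fmeasurable_Int_fmeasurable[OF lmeasurable_cball Cs] by (simp add: Int_commute)
  have "{x. norm x \<le> G x} = (\<Union>v\<in>V. C v \<inter> cball 0 v)"
    using GV by (auto simp: C_def)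
  then have "measure lebesgue {x. norm x \<le> G x} = (\<Sum>v\<in>V. measure lebesgue (C v \<inter> cball 0 v))"
  proof -
    have fin': "emeasure lebesgue (C v \<inter> cball 0 a) \<noteq> \<infinity>" for v a
      using fmeasurableD2[OF fm[of v a]] by simp
    have "measure lebesgue (\<Union>v\<in>V. C v \<inter> cball 0 v) = (\<Sum>v\<in>V. measure lebesgue (C v \<inter> cball 0 v))"
    proof (rule measure_finite_Union[OF fin])
      show "(\<lambda>v. C v \<inter> cball 0 v) ` V \<subseteq> sets lebesgue" using fm by blast
      show "disjoint_family_on (\<lambda>v. C v \<inter> cball 0 v) V" by (auto simp: disjoint_family_on_def C_def)
    qed (rule fin')
    then show ?thesis using \<open>{x. norm x \<le> G x} = (\<Union>v\<in>V. C v \<inter> cball 0 v)\<close> by simp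
  qed
  also have "\<dots> = (\<Sum>v\<in>V. v ^ DIM('a) * measure lebesgue (C v \<inter> cball 0 1))"
  proof (rule sum.cong[OF refl])
    fix v assume "v \<in> V"
    show "measure lebesgue (C v \<inter> cball 0 v) = v ^ DIM('a) * measure lebesgue (C v \<inter> cball 0 1)"
      by (rule cone_scale[OF Chom nonneg[OF \<open>v \<in> V\<close>]])
  qed
  also have "\<dots> = (\<Sum>v\<in>V. (\<integral>x. v ^ DIM('a) * indicator (C v \<inter> cball 0 1) x \<partial>lebesgue))"
  proof (rule sum.cong[OF refl])
    fix v
    show "v ^ DIM('a) * measure lebesgue (C v \<inter> cball 0 1) = (\<integral>x. v ^ DIM('a) * indicator (C v \<inter> cball 0 1) x \<partial>lebesgue)"
      unfolding integral_mult_right_zero integral_indicator by simp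
  qed
  also have "\<dots> = (\<integral>x. (\<Sum>v\<in>V. v ^ DIM('a) * indicator (C v \<inter> cball 0 1) x) \<partial>lebesgue)"
  proof (rule Bochner_Integration.integral_sum[symmetric])
    fix v assume "v \<in> V"
    have "integrable lebesgue (indicator (C v \<inter> cball 0 1) :: 'a \<Rightarrow> real)"
      by (rule fm_integrable[OF fm])
    then show "integrable lebesgue (\<lambda>x. v ^ DIM('a) * indicator (C v \<inter> cball 0 1) x)"
      by (rule integrable_mult_right)
  qed
  also have "\<dots> = (\<integral>x. indicator (cball 0 1) x * G x ^ DIM('a) \<partial>lebesgue)"
  proof (rule Bochner_Integration.integral_cong[OF refl])
    fix x
    have "(\<Sum>v\<in>V. v ^ DIM('a) * indicator (C v \<inter> cball 0 1) x)
        = (\<Sum>v\<in>V. if G x = v then v ^ DIM('a) * indicator (cball 0 1) x else 0)"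
      by (intro sum.cong) (auto simp: C_def indicator_def)
    also have "\<dots> = G x ^ DIM('a) * indicator (cball 0 1) x"
      using GV[of x] fin by (simp add: sum.delta)
    finally show "(\<Sum>v\<in>V. v ^ DIM('a) * indicator (C v \<inter> cball 0 1) x) = indicator (cball 0 1) x * G x ^ DIM('a)"
      by simp
  qed
  finally show ?thesis .
qed

lemma eq_if_le_inv:
  fixes a b K :: real
  assumes "\<And>n::nat. n > 0 \<Longrightarrow> \<bar>a - b\<bar> \<le> K / real n"
  shows "a = b"
proof (rule ccontr)
  assume "a \<noteq> b"
  then have e: "\<bar>a - b\<bar> > 0" by simp
  obtain m :: nat where m: "K / \<bar>a - b\<bar> < real m" using reals_Archimedean2 by blast
  have "\<bar>a - b\<bar> \<le> K / real (Suc m)" using assms[of "Suc m"] by simp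
  moreover have "K / real (Suc m) < \<bar>a - b\<bar>"
  proof -
    have "K < real m * \<bar>a - b\<bar>" using m e by (simp add: field_simps)
    also have "\<dots> \<le> real (Suc m) * \<bar>a - b\<bar>" using e by (intro mult_right_mono) auto
    finally show ?thesis by (simp add: field_simps)
  qed
  ultimately show False by simp
qed

lemma power_diff_le:
  fixes a b :: real
  assumes "0 \<le> b" "b \<le> a"
  shows "a ^ n - b ^ n \<le> real n * a ^ (n - 1) * (a - b)"
proof -
  have "a ^ n - b ^ n = (a - b) * (\<Sum>i<n. b ^ (n - Suc i) * a ^ i)"
    by (rule power_diff_sumr2)
  also have "\<dots> \<le> (a - b) * (\<Sum>i<n. a ^ (n - 1))"
  proof (intro mult_left_mono sum_mono)
    fix i assume i: "i \<in> {..<n}"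
    have "b ^ (n - Suc i) * a ^ i \<le> a ^ (n - Suc i) * a ^ i"
      using assms by (intro mult_right_mono power_mono) auto
    also have "\<dots> = a ^ (n - 1)" using i by (simp add: power_add[symmetric])
    finally show "b ^ (n - Suc i) * a ^ i \<le> a ^ (n - 1)" .
  qed (use assms in auto)
  finally show ?thesis by (simp add: algebra_simps)
qed

lemma norm_meas_leb[measurable]: "(\<lambda>x::'a::euclidean_space. norm x) \<in> borel_measurable lebesgue"
  using measurable_compose[OF id_borel_measurable_lebesgue borel_measurable_norm] by (simp add: id_def)

lemma sandwich_abs:
  fixes a1 a2 b c1 c c2 e :: real
  shows "a1 \<le> b \<Longrightarrow> b \<le> a2 \<Longrightarrow> c1 \<le> c \<Longrightarrow> c \<le> c2 \<Longrightarrow> a1 = c1 \<Longrightarrow> a2 = c2 \<Longrightarrow> c2 - c1 \<le> e \<Longrightarrow> \<bar>b - c\<bar> \<le> e"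
  by linarith

lemma polar:
  fixes F :: "'a::euclidean_space \<Rightarrow> real"
  assumes meas[measurable]: "F \<in> borel_measurable lebesgue" and nonneg: "\<And>x. 0 \<le> F x"
    and bnd: "\<And>x. F x \<le> M" and hom: "\<And>x s. s > 0 \<Longrightarrow> F (s *\<^sub>R x) = F x"
  shows "measure lebesgue {x. norm x \<le> F x} = (\<integral>x. indicator (cball 0 1) x * F x ^ DIM('a) \<partial>lebesgue)"
proof (rule eq_if_le_inv)
  fix n :: nat assume n: "n > 0"
  define G where "G x = real_of_int \<lfloor>real n * F x\<rfloor> / real n" for x
  define G' where "G' x = G x + 1 / real n" for x
  define N where "N = nat \<lfloor>real n * M\<rfloor>"
  define V where "V = (\<lambda>j. real j / real n) ` {0..N}"
  have M0: "0 \<le> M" using nonneg[of 0] bnd[of 0] by simp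
  have GV: "G x \<in> V" for x
  proof -
    have "0 \<le> \<lfloor>real n * F x\<rfloor>" using nonneg[of x] n by simp
    moreover have "\<lfloor>real n * F x\<rfloor> \<le> \<lfloor>real n * M\<rfloor>"
      using bnd[of x] n by (intro floor_mono mult_left_mono) auto
    ultimately have "nat \<lfloor>real n * F x\<rfloor> \<in> {0..N}" unfolding N_def by auto
    moreover have "G x = real (nat \<lfloor>real n * F x\<rfloor>) / real n"
      using \<open>0 \<le> \<lfloor>real n * F x\<rfloor>\<close> unfolding G_def by simp
    ultimately show ?thesis unfolding V_def by blast
  qed
  have G'V: "G' x \<in> (\<lambda>v. v + 1 / real n) ` V" for x using GV[of x] unfolding G'_def by blast
  have Vnn: "v \<in> V \<Longrightarrow> 0 \<le> v" for v unfolding V_def by auto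
  have G_le: "G x \<le> F x" for x
  proof -
    have "real_of_int \<lfloor>real n * F x\<rfloor> \<le> real n * F x" by (rule of_int_floor_le)
    then show ?thesis unfolding G_def using n by (simp add: field_simps)
  qed
  have G'_ge: "F x \<le> G' x" for x
  proof -
    have "real n * F x \<le> real_of_int \<lfloor>real n * F x\<rfloor> + 1" by linarith
    then show ?thesis unfolding G'_def G_def using n by (simp add: field_simps)
  qed
  have G0: "0 \<le> G x" for x using GV[of x] Vnn by blast
  have n1: "1 / real n \<le> 1" using n by simp
  have G'M: "G' x \<le> M + 1" for x using G_le[of x] bnd[of x] n1 unfolding G'_def by linarith
  have measG[measurable]: "G \<in> borel_measurable lebesgue" unfolding G_def by measurable
  have measG'[measurable]: "G' \<in> borel_measurable lebesgue" unfolding G'_def by measurable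
  have homG: "G (s *\<^sub>R x) = G x" if "s > 0" for s x unfolding G_def using hom[OF that] by simp
  have homG': "G' (s *\<^sub>R x) = G' x" if "s > 0" for s x unfolding G'_def using homG[OF that] by simp
  have pG: "measure lebesgue {x. norm x \<le> G x} = (\<integral>x. indicator (cball 0 1) x * G x ^ DIM('a) \<partial>lebesgue)"
    by (rule polar_step[OF _ GV Vnn measG homG]) (simp add: V_def)
  have pG': "measure lebesgue {x. norm x \<le> G' x} = (\<integral>x. indicator (cball 0 1) x * G' x ^ DIM('a) \<partial>lebesgue)"
    by (rule polar_step[OF _ G'V _ measG' homG']) (use Vnn n in \<open>auto simp: V_def\<close>)
  have sets: "{x. norm x \<le> H x} \<in> sets lebesgue" if [measurable]: "H \<in> borel_measurable lebesgue" for H :: "'a \<Rightarrow> real"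
  proof -
    have "{x \<in> space lebesgue. norm x \<le> H x} \<in> sets lebesgue" by measurable
    then show ?thesis by simp
  qed
  have sub: "{x. norm x \<le> G' x} \<subseteq> cball 0 (M + 1)"
  proof
    fix x assume "x \<in> {x. norm x \<le> G' x}"
    then have "norm x \<le> G' x" by simp
    also have "\<dots> \<le> M + 1" by (rule G'M)
    finally show "x \<in> cball 0 (M + 1)" by simp
  qed
  have fm: "{x. norm x \<le> G' x} \<in> fmeasurable lebesgue"
    by (rule fmeasurableI2[OF lmeasurable_cball[of 0 "M + 1"] sub sets[OF measG']])
  have subF: "{x. norm x \<le> F x} \<subseteq> {x. norm x \<le> G' x}"
    using G'_ge by (auto intro: order_trans)
  have fmF: "{x. norm x \<le> F x} \<in> fmeasurable lebesgue"
    by (rule fmeasurableI2[OF fm subF sets[OF meas]])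
  have m1: "measure lebesgue {x. norm x \<le> G x} \<le> measure lebesgue {x. norm x \<le> F x}"
    by (rule measure_mono_fmeasurable[OF _ sets[OF measG] fmF]) (use G_le in \<open>auto intro: order_trans\<close>)
  have m2: "measure lebesgue {x. norm x \<le> F x} \<le> measure lebesgue {x. norm x \<le> G' x}"
    by (rule measure_mono_fmeasurable[OF _ sets[OF meas] fm]) (use G'_ge in \<open>auto intro: order_trans\<close>)
  have int: "integrable lebesgue (\<lambda>x. indicator (cball 0 1) x * H x ^ DIM('a))"
    if [measurable]: "H \<in> borel_measurable lebesgue" and "\<And>x. 0 \<le> H x" "\<And>x. H x \<le> M + 1" for H :: "'a \<Rightarrow> real"
  proof -
    have "integrable lebesgue (\<lambda>x. indicator (cball 0 1) x *\<^sub>R H x ^ DIM('a))"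
    proof (rule integrableI_bounded_set_indicator[where B="(M + 1) ^ DIM('a)"])
      show "emeasure lebesgue (cball (0::'a) 1) < \<infinity>"
        by (rule fm_emeasure[OF lmeasurable_cball])
      show "AE x in lebesgue. x \<in> cball 0 1 \<longrightarrow> norm (H x ^ DIM('a)) \<le> (M + 1) ^ DIM('a)"
        using that(2,3) by (auto intro!: power_mono simp: abs_of_nonneg)
    qed auto
    then show ?thesis by simp
  qed
  have FM1: "F x \<le> M + 1" for x using bnd[of x] by simp
  have G_M1: "G x \<le> M + 1" for x using G_le[of x] FM1[of x] by simp
  have G'0: "0 \<le> G' x" for x using G0[of x] n unfolding G'_def by simp
  have i1: "(\<integral>x. indicator (cball 0 1) x * G x ^ DIM('a) \<partial>lebesgue) \<le> (\<integral>x. indicator (cball 0 1) x * F x ^ DIM('a) \<partial>lebesgue)"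
    by (rule Bochner_Integration.integral_mono[OF int[OF measG G0 G_M1] int[OF meas nonneg FM1]])
       (auto simp: indicator_def intro!: power_mono G_le G0)
  have i2: "(\<integral>x. indicator (cball 0 1) x * F x ^ DIM('a) \<partial>lebesgue) \<le> (\<integral>x. indicator (cball 0 1) x * G' x ^ DIM('a) \<partial>lebesgue)"
    by (rule Bochner_Integration.integral_mono[OF int[OF meas nonneg FM1] int[OF measG' G'0 G'M]])
       (auto simp: indicator_def intro!: power_mono G'_ge nonneg)
  define K where "K = real DIM('a) * (M + 1) ^ (DIM('a) - 1) * measure lebesgue (cball (0::'a) 1)"
  have i3: "(\<integral>x. indicator (cball 0 1) x * G' x ^ DIM('a) \<partial>lebesgue) - (\<integral>x. indicator (cball 0 1) x * G x ^ DIM('a) \<partial>lebesgue) \<le> K / real n"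
  proof -
    have "(\<integral>x. indicator (cball 0 1) x * G' x ^ DIM('a) \<partial>lebesgue) - (\<integral>x. indicator (cball 0 1) x * G x ^ DIM('a) \<partial>lebesgue)
        = (\<integral>x. indicator (cball 0 1) x * G' x ^ DIM('a) - indicator (cball 0 1) x * G x ^ DIM('a) \<partial>lebesgue)"
      by (rule Bochner_Integration.integral_diff[symmetric, OF int[OF measG' G'0 G'M] int[OF measG G0 G_M1]])
    also have "\<dots> \<le> (\<integral>x. indicator (cball (0::'a) 1) x * (real DIM('a) * (M + 1) ^ (DIM('a) - 1) / real n) \<partial>lebesgue)"
    proof (rule Bochner_Integration.integral_mono)
      show "integrable lebesgue (\<lambda>x. indicator (cball 0 1) x * G' x ^ DIM('a) - indicator (cball 0 1) x * G x ^ DIM('a))"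
        by (rule Bochner_Integration.integrable_diff[OF int[OF measG' G'0 G'M] int[OF measG G0 G_M1]])
      show "integrable lebesgue (\<lambda>x. indicator (cball (0::'a) 1) x * (real DIM('a) * (M + 1) ^ (DIM('a) - 1) / real n))"
        using lmeasurable_cball[of "0::'a" 1]
        by (intro integrable_mult_left fm_integrable[OF lmeasurable_cball])
      fix x :: 'a
      have "G' x ^ DIM('a) - G x ^ DIM('a) \<le> real DIM('a) * G' x ^ (DIM('a) - 1) * (G' x - G x)"
        using G0[of x] G_le[of x] G'_ge[of x] by (intro power_diff_le) auto
      also have "\<dots> \<le> real DIM('a) * (M + 1) ^ (DIM('a) - 1) * (1 / real n)"
      proof -
        have "G' x ^ (DIM('a) - 1) \<le> (M + 1) ^ (DIM('a) - 1)" by (rule power_mono[OF G'M G'0])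
        moreover have "G' x - G x = 1 / real n" unfolding G'_def by simp
        ultimately show ?thesis using n
          by (simp add: mult_left_mono divide_right_mono)
      qed
      finally show "indicator (cball 0 1) x * G' x ^ DIM('a) - indicator (cball 0 1) x * G x ^ DIM('a)
          \<le> indicator (cball 0 1) x * (real DIM('a) * (M + 1) ^ (DIM('a) - 1) / real n)"
        by (auto simp: indicator_def)
    qed
    also have "\<dots> = K / real n" unfolding K_def by simp
    finally show ?thesis .
  qed
  show "\<bar>measure lebesgue {x. norm x \<le> F x} - (\<integral>x. indicator (cball 0 1) x * F x ^ DIM('a) \<partial>lebesgue)\<bar> \<le> K / real n"
    by (rule sandwich_abs[OF m1 m2 i1 i2 pG pG' i3])
qed

lemma hsupp_bound:
  assumes "compact K" "K \<noteq> {}" "\<And>k. k \<in> K \<Longrightarrow> norm k \<le> D"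
  shows "\<bar>hsupp K u\<bar> \<le> D * norm u"
proof -
  obtain p where p: "p \<in> K" "hsupp K u = p \<bullet> u" using hsupp_attained[OF assms(1,2)] by blast
  have "\<bar>p \<bullet> u\<bar> \<le> norm p * norm u" by (rule Cauchy_Schwarz_ineq2)
  also have "\<dots> \<le> D * norm u" using assms(3)[OF p(1)] by (simp add: mult_right_mono)
  finally show ?thesis using p by simp
qed

lemma hsupp_lip:
  assumes "compact K" "K \<noteq> {}" "\<And>k. k \<in> K \<Longrightarrow> norm k \<le> D"
  shows "hsupp K u - hsupp K v \<le> D * norm (u - v)"
proof -
  obtain p where p: "p \<in> K" "hsupp K u = p \<bullet> u" using hsupp_attained[OF assms(1,2)] by blast
  have "p \<bullet> v \<le> hsupp K v" by (rule hsupp_upper[OF assms(1) p(1)])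
  moreover have "p \<bullet> (u - v) \<le> norm p * norm (u - v)" by (rule norm_cauchy_schwarz)
  moreover have "norm p * norm (u - v) \<le> D * norm (u - v)" using assms(3)[OF p(1)] by (simp add: mult_right_mono)
  ultimately show ?thesis using p by (simp add: inner_diff_right)
qed

lemma hsupp_cont:
  assumes "compact K" "K \<noteq> {}"
  shows "continuous_on UNIV (hsupp K)"
proof -
  obtain D where D: "\<And>k. k \<in> K \<Longrightarrow> norm k \<le> D" "D > 0"
    using compact_imp_bounded[OF assms(1)] by (meson bounded_pos)
  have "dist (hsupp K u) (hsupp K v) \<le> D * dist u v" for u v
    using hsupp_lip[OF assms D(1), of u v] hsupp_lip[OF assms D(1), of v u]
    by (simp add: dist_real_def dist_norm norm_minus_commute abs_le_iff)
  then have "uniformly_continuous_on UNIV (hsupp K)"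
    unfolding uniformly_continuous_on_def using D(2)
    by (metis divide_pos_pos le_less_trans mult.commute pos_less_divide_eq)
  then show ?thesis by (rule uniformly_continuous_imp_continuous)
qed

lemma H_meas[measurable]:
  assumes "compact K" "K \<noteq> {}"
  shows "(\<lambda>x. hsupp K (sgn x)) \<in> borel_measurable lebesgue"
proof -
  have "hsupp K \<in> borel_measurable borel" by (rule borel_measurable_continuous_onI[OF hsupp_cont[OF assms]])
  then have "(\<lambda>x. hsupp K (sgn x)) \<in> borel_measurable borel" by measurable
  from measurable_compose[OF id_borel_measurable_lebesgue this] show ?thesis by (simp add: id_def)
qed

lemma hsupp_zero: "K \<noteq> {} \<Longrightarrow> hsupp K 0 = 0"
  unfolding hsupp_def by (simp add: image_constant_conv)

lemma inner_sgn_self: "x \<bullet> sgn x = norm (x :: 'a::real_inner)"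
  by (simp add: sgn_div_norm inner_commute power2_norm_eq_inner[symmetric] power2_eq_square divide_simps)

lemma sgn_hom: "s > 0 \<Longrightarrow> sgn (s *\<^sub>R x) = sgn (x :: 'a::real_normed_vector)"
  by (simp add: sgn_scaleR)

lemma pb_upper:
  assumes "compact K" "x \<in> parallel_body K t"
  shows "norm x \<le> t + hsupp K (sgn x)"
proof -
  obtain k y where ky: "x = k + y" "k \<in> K" "norm y \<le> t"
    using assms(2) unfolding parallel_body_def by auto
  have "norm x = k \<bullet> sgn x + y \<bullet> sgn x" using ky(1) by (simp add: inner_sgn_self[symmetric] inner_add_left)
  also have "k \<bullet> sgn x \<le> hsupp K (sgn x)" by (rule hsupp_upper[OF assms(1) ky(2)])
  also have "y \<bullet> sgn x \<le> norm y * norm (sgn x)" by (rule norm_cauchy_schwarz)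
  also have "norm y * norm (sgn x) \<le> t * 1"
  proof -
    have t0: "0 \<le> t" using ky(3) norm_ge_zero[of y] by linarith
    have "norm (sgn x) \<le> 1" by (simp add: norm_sgn)
    then show ?thesis using ky(3) t0 by (intro mult_mono) auto
  qed
  finally show ?thesis by simp
qed

lemma pb_lower:
  fixes K :: "'a::euclidean_space set"
  assumes K: "compact K" "K \<noteq> {}" and Dk: "\<And>k. k \<in> K \<Longrightarrow> norm k \<le> D" and D: "D > 0"
    and t: "t \<ge> 2 * D" and x: "norm x \<le> t + hsupp K (sgn x) - D\<^sup>2 / t"
  shows "x \<in> parallel_body K t"
proof -
  have tpos: "t > 0" using t D by simp
  have Dt: "D \<le> t" using t D by simp
  show ?thesis
  proof (cases "x = 0")
    case True
    obtain k0 where k0: "k0 \<in> K" using K(2) by blast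
    have "norm (- k0) \<le> t" using Dk[OF k0] Dt by simp
    moreover have "x = k0 + (- k0)" using True by simp
    ultimately show ?thesis unfolding parallel_body_def using k0 by fastforce
  next
    case False
    define u where "u = sgn x"
    have u: "norm u = 1" using False by (simp add: u_def norm_sgn)
    obtain p where p: "p \<in> K" "hsupp K u = p \<bullet> u" using hsupp_attained[OF K] by blast
    define s where "s = norm x"
    define a where "a = p \<bullet> u"
    have xs: "x = s *\<^sub>R u" unfolding s_def u_def using False by (simp add: sgn_div_norm)
    have s0: "s \<ge> 0" unfolding s_def by simp
    have hyp: "s \<le> t + a - D\<^sup>2 / t" using x p unfolding s_def a_def u_def by simp
    have pD: "(norm p)\<^sup>2 \<le> D\<^sup>2" using Dk[OF p(1)] by (simp add: power_mono)
    have ap: "a\<^sup>2 \<le> (norm p)\<^sup>2"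
    proof -
      have "\<bar>a\<bar> \<le> norm p * norm u" unfolding a_def by (rule Cauchy_Schwarz_ineq2)
      then have "\<bar>a\<bar> \<le> norm p" using u by simp
      then show ?thesis by (metis abs_ge_zero power2_abs power_mono)
    qed
    define y where "y = x - p"
    have y2: "(norm y)\<^sup>2 = s\<^sup>2 - 2 * s * a + (norm p)\<^sup>2"
    proof -
      have yy: "y = s *\<^sub>R u + (- p)" unfolding y_def xs by simp
      have "(norm y)\<^sup>2 = (norm (s *\<^sub>R u))\<^sup>2 + 2 * ((s *\<^sub>R u) \<bullet> (- p)) + (norm (- p))\<^sup>2"
        unfolding yy by (rule norm_add_sq)
      also have "\<dots> = s\<^sup>2 - 2 * s * a + (norm p)\<^sup>2"
        using u s0 unfolding a_def by (simp add: power_mult_distrib inner_commute)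
      finally show ?thesis .
    qed
    have "(norm y)\<^sup>2 \<le> t\<^sup>2"
    proof (cases "s \<ge> a")
      case True
      define z where "z = s - a"
      define w where "w = t - D\<^sup>2 / t"
      have q: "D\<^sup>2 / t \<le> D"
      proof -
        have "D\<^sup>2 / t = D * (D / t)" by (simp add: power2_eq_square)
        also have "\<dots> \<le> D * 1" using D tpos Dt by (intro mult_left_mono) auto
        finally show ?thesis by simp
      qed
      have q0: "0 \<le> D\<^sup>2 / t" using tpos by simp
      have w0: "0 \<le> w" unfolding w_def using q Dt by linarith
      have z0: "0 \<le> z" unfolding z_def using True by simp
      have zw: "z \<le> w" unfolding z_def w_def using hyp by simp
      have "z\<^sup>2 \<le> w\<^sup>2" using zw z0 by (rule power_mono)
      also have "w\<^sup>2 = t\<^sup>2 - 2 * D\<^sup>2 + (D\<^sup>2 / t)\<^sup>2"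
        unfolding w_def using tpos by (simp add: power2_diff power2_eq_square field_simps)
      also have "(D\<^sup>2 / t)\<^sup>2 \<le> D\<^sup>2" using q q0 by (rule power_mono)
      finally have zz: "z\<^sup>2 \<le> t\<^sup>2 - D\<^sup>2" by simp
      have "(norm y)\<^sup>2 = z\<^sup>2 - a\<^sup>2 + (norm p)\<^sup>2" unfolding y2 z_def by (simp add: power2_diff)
      also have "\<dots> \<le> z\<^sup>2 + D\<^sup>2" using pD zero_le_power2[of a] by linarith
      finally show ?thesis using zz by simp
    next
      case False
      have "s * (s - 2 * a) \<le> 0" using False s0 by (intro mult_nonneg_nonpos) auto
      then have "s\<^sup>2 - 2 * s * a \<le> 0" by (simp add: power2_eq_square algebra_simps)
      moreover have "D\<^sup>2 \<le> t\<^sup>2" using Dt D by (simp add: power_mono)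
      ultimately show ?thesis using y2 pD by simp
    qed
    then have "norm y \<le> t" using tpos by (simp add: power2_le_iff_abs_le)
    moreover have "x = p + y" unfolding y_def by simp
    ultimately show ?thesis unfolding parallel_body_def using p(1) by fastforce
  qed
qed

lemma poly_step_identity:
  fixes t e :: real
  shows "(t + e) ^ Suc (Suc m) - t ^ Suc (Suc m) - real (Suc (Suc m)) * t ^ Suc m * e
    = (t + e) * ((t + e) ^ Suc m - t ^ Suc m - real (Suc m) * t ^ m * e) + real (Suc m) * t ^ m * e\<^sup>2"
  by (simp add: algebra_simps power2_eq_square)

lemma poly_bound:
  fixes E :: real
  assumes E: "E \<ge> 0"
  shows "\<exists>C\<ge>0. \<forall>t e. t \<ge> 1 \<longrightarrow> \<bar>e\<bar> \<le> E \<longrightarrow>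
      t * \<bar>(t + e) ^ Suc m - t ^ Suc m - real (Suc m) * t ^ m * e\<bar> \<le> C * t ^ m"
proof (induction m)
  case 0
  show ?case by (rule exI[of _ 0]) simp
next
  case (Suc m)
  then obtain C where C: "C \<ge> 0" "\<And>t e. t \<ge> 1 \<Longrightarrow> \<bar>e\<bar> \<le> E \<Longrightarrow>
      t * \<bar>(t + e) ^ Suc m - t ^ Suc m - real (Suc m) * t ^ m * e\<bar> \<le> C * t ^ m" by blast
  define C' where "C' = (1 + E) * C + real (Suc m) * E\<^sup>2"
  have "C' \<ge> 0" unfolding C'_def using C E by simp
  moreover have "t * \<bar>(t + e) ^ Suc (Suc m) - t ^ Suc (Suc m) - real (Suc (Suc m)) * t ^ Suc m * e\<bar> \<le> C' * t ^ Suc m"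
    if t: "t \<ge> 1" and e: "\<bar>e\<bar> \<le> E" for t e
  proof -
    define R where "R = (t + e) ^ Suc m - t ^ Suc m - real (Suc m) * t ^ m * e"
    have IH: "t * \<bar>R\<bar> \<le> C * t ^ m" unfolding R_def by (rule C(2)[OF t e])
    have "E * 1 \<le> E * t" using E t by (intro mult_left_mono) auto
    then have te: "\<bar>t + e\<bar> \<le> (1 + E) * t" using t e by (simp add: algebra_simps)
    have e2: "e\<^sup>2 \<le> E\<^sup>2" using e by (metis abs_ge_zero power2_abs power_mono)
    have "t * \<bar>(t + e) ^ Suc (Suc m) - t ^ Suc (Suc m) - real (Suc (Suc m)) * t ^ Suc m * e\<bar>
        = t * \<bar>(t + e) * R + real (Suc m) * t ^ m * e\<^sup>2\<bar>"
      unfolding R_def poly_step_identity ..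
    also have "\<dots> \<le> \<bar>t + e\<bar> * (t * \<bar>R\<bar>) + real (Suc m) * t ^ Suc m * e\<^sup>2"
    proof -
      have "\<bar>(t + e) * R + real (Suc m) * t ^ m * e\<^sup>2\<bar> \<le> \<bar>t + e\<bar> * \<bar>R\<bar> + real (Suc m) * t ^ m * e\<^sup>2"
      proof -
        have X: "real (Suc m) * t ^ m * e\<^sup>2 \<ge> 0" using t by simp
        have "\<bar>(t + e) * R + real (Suc m) * t ^ m * e\<^sup>2\<bar> \<le> \<bar>(t + e) * R\<bar> + \<bar>real (Suc m) * t ^ m * e\<^sup>2\<bar>"
          by (rule abs_triangle_ineq)
        then show ?thesis using X by (simp add: abs_mult)
      qed
      then have "t * \<bar>(t + e) * R + real (Suc m) * t ^ m * e\<^sup>2\<bar> \<le> t * (\<bar>t + e\<bar> * \<bar>R\<bar> + real (Suc m) * t ^ m * e\<^sup>2)"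
        using t by (intro mult_left_mono) auto
      then show ?thesis by (simp add: algebra_simps)
    qed
    also have "\<dots> \<le> ((1 + E) * t) * (C * t ^ m) + real (Suc m) * t ^ Suc m * E\<^sup>2"
    proof (rule add_mono)
      show "\<bar>t + e\<bar> * (t * \<bar>R\<bar>) \<le> ((1 + E) * t) * (C * t ^ m)"
        by (rule mult_mono[OF te IH]) (use t E in auto)
      show "real (Suc m) * t ^ Suc m * e\<^sup>2 \<le> real (Suc m) * t ^ Suc m * E\<^sup>2"
        using e2 t by (intro mult_left_mono) auto
    qed
    also have "\<dots> = C' * t ^ Suc m" unfolding C'_def by (simp add: algebra_simps)
    finally show ?thesis .
  qed
  ultimately show ?case by blast
qed

lemma omega_pos: "omega k > 0"
  unfolding omega_def by (intro divide_pos_pos) (auto intro!: Gamma_real_pos simp: add_pos_nonneg)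

lemma omega_ball: "measure lebesgue (cball (0::'a::euclidean_space) 1) = omega DIM('a)"
proof -
  have "measure lebesgue (cball (0::'a) 1) = measure lborel (cball (0::'a) 1)"
    by (rule measure_completion) simp
  also have "\<dots> = unit_ball_vol (DIM('a)) * 1 ^ DIM('a)" by (rule content_cball) simp
  also have "\<dots> = omega DIM('a)" by (simp add: unit_ball_vol_def omega_def add.commute)
  finally show ?thesis .
qed

lemma integrable_ball:
  fixes f :: "'a::euclidean_space \<Rightarrow> real"
  assumes [measurable]: "f \<in> borel_measurable lebesgue" and b: "\<And>x. \<bar>f x\<bar> \<le> B"
  shows "integrable lebesgue (\<lambda>x. indicator (cball (0::'a) 1) x * f x)"
proof -
  have "integrable lebesgue (\<lambda>x. indicator (cball (0::'a) 1) x *\<^sub>R f x)"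
  proof (rule integrableI_bounded_set_indicator[where B=B])
    show "emeasure lebesgue (cball (0::'a) 1) < \<infinity>"
      by (rule fm_emeasure[OF lmeasurable_cball])
    show "AE x in lebesgue. x \<in> cball 0 1 \<longrightarrow> norm (f x) \<le> B"
      using b by simp
  qed auto
  then show ?thesis by simp
qed

lemma int_affine_ball:
  fixes H :: "'a::euclidean_space \<Rightarrow> real"
  assumes int: "integrable lebesgue (\<lambda>x. indicator (cball (0::'a) 1) x * H x)"
  shows "(\<integral>x. indicator (cball (0::'a) 1) x * (\<alpha> + \<beta> * H x) \<partial>lebesgue)
    = \<alpha> * measure lebesgue (cball (0::'a) 1) + \<beta> * (\<integral>x. indicator (cball (0::'a) 1) x * H x \<partial>lebesgue)"
proof -
  have i1: "integrable lebesgue (\<lambda>x. \<alpha> * indicator (cball (0::'a) 1) x)"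
    by (intro integrable_mult_right fm_integrable[OF lmeasurable_cball])
  have i2: "integrable lebesgue (\<lambda>x. \<beta> * (indicator (cball (0::'a) 1) x * H x))"
    by (intro integrable_mult_right int)
  have "(\<integral>x. indicator (cball (0::'a) 1) x * (\<alpha> + \<beta> * H x) \<partial>lebesgue)
      = (\<integral>x. \<alpha> * indicator (cball (0::'a) 1) x + \<beta> * (indicator (cball (0::'a) 1) x * H x) \<partial>lebesgue)"
    by (rule Bochner_Integration.integral_cong) (auto simp: algebra_simps)
  also have "\<dots> = (\<integral>x. \<alpha> * indicator (cball (0::'a) 1) x \<partial>lebesgue) + (\<integral>x. \<beta> * (indicator (cball (0::'a) 1) x * H x) \<partial>lebesgue)"
    by (rule Bochner_Integration.integral_add[OF i1 i2])
  also have "\<dots> = \<alpha> * measure lebesgue (cball (0::'a) 1) + \<beta> * (\<integral>x. indicator (cball (0::'a) 1) x * H x \<partial>lebesgue)"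
    unfolding integral_mult_right_zero integral_indicator by simp
  finally show ?thesis .
qed

lemma sets_le_norm: "H \<in> borel_measurable lebesgue \<Longrightarrow> {x::'a::euclidean_space. norm x \<le> H x} \<in> sets lebesgue"
proof -
  assume [measurable]: "H \<in> borel_measurable lebesgue"
  have "{x \<in> space lebesgue. norm x \<le> H x} \<in> sets lebesgue" by measurable
  then show ?thesis by simp
qed

lemma pb_compact: "compact K \<Longrightarrow> compact (parallel_body K t)"
  unfolding parallel_body_def by (intro compact_sums compact_cball)

definition Jf :: "'a::euclidean_space set \<Rightarrow> real" where
  "Jf K = (\<integral>x. indicator (cball (0::'a) 1) x * hsupp K (sgn x) \<partial>lebesgue)"

lemma vol_pb_bounds:
  fixes K :: "'a::euclidean_space set"
  assumes K: "compact K" "K \<noteq> {}" and Dk: "\<And>k. k \<in> K \<Longrightarrow> norm k \<le> D" and D: "D \<ge> 1"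
  obtains Q where "Q \<ge> 0" "\<And>t. t \<ge> 2 * D \<Longrightarrow>
      \<bar>vol (parallel_body K t) - omega DIM('a) * t ^ DIM('a) - real DIM('a) * t ^ (DIM('a) - 1) * Jf K\<bar>
        \<le> Q * t ^ (DIM('a) - 1) / t"
proof -
  obtain m where dm: "DIM('a) = Suc m" using DIM_positive not0_implies_Suc by blast
  define H where "H x = hsupp K (sgn x)" for x :: 'a
  have Hb: "\<bar>H x\<bar> \<le> D" for x
  proof -
    have "\<bar>H x\<bar> \<le> D * norm (sgn x)" unfolding H_def by (rule hsupp_bound[OF K Dk])
    also have "\<dots> \<le> D * 1" using D by (intro mult_left_mono) (auto simp: norm_sgn)
    finally show ?thesis by simp
  qed
  have Hm[measurable]: "H \<in> borel_measurable lebesgue" unfolding H_def by (rule H_meas[OF K])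
  have Hhom: "H (s *\<^sub>R x) = H x" if "s > 0" for s x unfolding H_def using that by (simp add: sgn_hom)
  have Hint: "integrable lebesgue (\<lambda>x. indicator (cball (0::'a) 1) x * H x)"
    by (rule integrable_ball[OF Hm Hb])
  have J: "Jf K = (\<integral>x. indicator (cball (0::'a) 1) x * H x \<partial>lebesgue)" unfolding Jf_def H_def ..
  define \<omega> where "\<omega> = measure lebesgue (cball (0::'a) 1)"
  have \<omega>: "\<omega> = omega DIM('a)" unfolding \<omega>_def by (rule omega_ball)
  have \<omega>0: "\<omega> \<ge> 0" unfolding \<omega>_def by simp
  obtain C1 where C1: "C1 \<ge> 0" "\<And>t e. t \<ge> 1 \<Longrightarrow> \<bar>e\<bar> \<le> D \<Longrightarrow>
      t * \<bar>(t + e) ^ Suc m - t ^ Suc m - real (Suc m) * t ^ m * e\<bar> \<le> C1 * t ^ m"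
    using poly_bound[of D m] D by auto
  obtain C2 where C2: "C2 \<ge> 0" "\<And>t e. t \<ge> 1 \<Longrightarrow> \<bar>e\<bar> \<le> D + D\<^sup>2 \<Longrightarrow>
      t * \<bar>(t + e) ^ Suc m - t ^ Suc m - real (Suc m) * t ^ m * e\<bar> \<le> C2 * t ^ m"
    using poly_bound[of "D + D\<^sup>2" m] D by auto
  define Q where "Q = (C1 + C2 + real (Suc m) * D\<^sup>2) * \<omega>"
  have Q0: "Q \<ge> 0" unfolding Q_def using C1 C2 \<omega>0 by simp
  have main: "\<bar>vol (parallel_body K t) - \<omega> * t ^ Suc m - real (Suc m) * t ^ m * Jf K\<bar> \<le> Q * t ^ m / t"
    if t: "t \<ge> 2 * D" for t
  proof -
    have t1: "t \<ge> 1" "t > 0" using t D by auto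
    define FU where "FU x = t + H x" for x
    define FL where "FL x = t + H x - D\<^sup>2 / t" for x
    have q: "D\<^sup>2 / t \<le> D / 2"
    proof -
      have "D\<^sup>2 / t = D * (D / t)" by (simp add: power2_eq_square)
      also have "D / t \<le> 1 / 2" using t t1 by (simp add: field_simps)
      then have "D * (D / t) \<le> D * (1 / 2)" using D by (intro mult_left_mono) auto
      finally show ?thesis by simp
    qed
    have q0: "0 \<le> D\<^sup>2 / t" using t1 by simp
    have "D\<^sup>2 * 1 \<le> D\<^sup>2 * t" using t1 by (intro mult_left_mono) auto
    then have qD: "D\<^sup>2 / t \<le> D\<^sup>2" using t1 by (simp add: divide_le_eq)
    have FU0: "0 \<le> FU x" and FUb: "FU x \<le> t + D" for x
      using Hb[of x] t D unfolding FU_def by auto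
    have FL0: "0 \<le> FL x" and FLb: "FL x \<le> t + D" for x
      using Hb[of x] t D q q0 unfolding FL_def abs_le_iff by linarith+
    have [measurable]: "FU \<in> borel_measurable lebesgue" "FL \<in> borel_measurable lebesgue"
      unfolding FU_def FL_def by measurable
    have FUhom: "FU (s *\<^sub>R x) = FU x" "FL (s *\<^sub>R x) = FL x" if "s > 0" for s x
      unfolding FU_def FL_def using Hhom[OF that] by auto
    have pU: "measure lebesgue {x. norm x \<le> FU x} = (\<integral>x. indicator (cball 0 1) x * FU x ^ DIM('a) \<partial>lebesgue)"
      by (rule polar[OF _ FU0 FUb FUhom(1)]) measurable
    have pL: "measure lebesgue {x. norm x \<le> FL x} = (\<integral>x. indicator (cball 0 1) x * FL x ^ DIM('a) \<partial>lebesgue)"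
      by (rule polar[OF _ FL0 FLb FUhom(2)]) measurable
    have PBc: "parallel_body K t \<in> fmeasurable lebesgue" using pb_compact[OF K(1)] by (rule lmeasurable_compact)
    have subU: "parallel_body K t \<subseteq> {x. norm x \<le> FU x}"
      using pb_upper[OF K(1)] unfolding FU_def H_def by blast
    have subL: "{x. norm x \<le> FL x} \<subseteq> parallel_body K t"
      using pb_lower[OF K Dk _ t] D unfolding FL_def H_def by auto
    have subU2: "{x. norm x \<le> FU x} \<subseteq> cball 0 (t + D)"
    proof
      fix x assume "x \<in> {x. norm x \<le> FU x}"
      then have "norm x \<le> FU x" by simp
      also have "\<dots> \<le> t + D" by (rule FUb)
      finally show "x \<in> cball 0 (t + D)" by simp
    qed
    have fmU: "{x. norm x \<le> FU x} \<in> fmeasurable lebesgue"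
      by (rule fmeasurableI2[OF lmeasurable_cball subU2]) (rule sets_le_norm, measurable)
    have v1: "vol (parallel_body K t) \<le> measure lebesgue {x. norm x \<le> FU x}"
      unfolding vol_def by (rule measure_mono_fmeasurable[OF subU _ fmU]) (use PBc in blast)
    have v2: "measure lebesgue {x. norm x \<le> FL x} \<le> vol (parallel_body K t)"
      unfolding vol_def by (rule measure_mono_fmeasurable[OF subL _ PBc]) (rule sets_le_norm, measurable)
    have ptU: "FU x ^ Suc m \<le> (t ^ Suc m + C1 * t ^ m / t) + real (Suc m) * t ^ m * H x" for x
    proof -
      have "t * \<bar>(t + H x) ^ Suc m - t ^ Suc m - real (Suc m) * t ^ m * H x\<bar> \<le> C1 * t ^ m"
        by (rule C1(2)[OF t1(1) Hb])
      then have "\<bar>(t + H x) ^ Suc m - t ^ Suc m - real (Suc m) * t ^ m * H x\<bar> \<le> C1 * t ^ m / t"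
        using t1 by (simp add: field_simps)
      then show ?thesis unfolding FU_def by (simp add: abs_le_iff)
    qed
    have ptL: "(t ^ Suc m - real (Suc m) * t ^ m * (D\<^sup>2 / t) - C2 * t ^ m / t) + real (Suc m) * t ^ m * H x \<le> FL x ^ Suc m" for x
    proof -
      have "\<bar>H x - D\<^sup>2 / t\<bar> \<le> D + D\<^sup>2" using Hb[of x] q0 qD by (simp add: abs_le_iff)
      then have "t * \<bar>(t + (H x - D\<^sup>2 / t)) ^ Suc m - t ^ Suc m - real (Suc m) * t ^ m * (H x - D\<^sup>2 / t)\<bar> \<le> C2 * t ^ m"
        by (rule C2(2)[OF t1(1)])
      then have "\<bar>(t + (H x - D\<^sup>2 / t)) ^ Suc m - t ^ Suc m - real (Suc m) * t ^ m * (H x - D\<^sup>2 / t)\<bar> \<le> C2 * t ^ m / t"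
        using t1 by (simp add: field_simps)
      then have "t ^ Suc m + real (Suc m) * t ^ m * (H x - D\<^sup>2 / t) - C2 * t ^ m / t \<le> (t + (H x - D\<^sup>2 / t)) ^ Suc m"
        unfolding abs_le_iff by linarith
      moreover have "t + (H x - D\<^sup>2 / t) = FL x" unfolding FL_def by simp
      moreover have "t ^ Suc m + real (Suc m) * t ^ m * (H x - D\<^sup>2 / t) - C2 * t ^ m / t
          = (t ^ Suc m - real (Suc m) * t ^ m * (D\<^sup>2 / t) - C2 * t ^ m / t) + real (Suc m) * t ^ m * H x"
        by (simp add: algebra_simps)
      ultimately show ?thesis by simp
    qed
    have intU: "integrable lebesgue (\<lambda>x. indicator (cball (0::'a) 1) x * FU x ^ DIM('a))"
      by (rule integrable_ball[where B="(t + D) ^ DIM('a)"]) (measurable, use FU0 FUb in \<open>auto intro!: power_mono\<close>)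
    have intL: "integrable lebesgue (\<lambda>x. indicator (cball (0::'a) 1) x * FL x ^ DIM('a))"
      by (rule integrable_ball[where B="(t + D) ^ DIM('a)"]) (measurable, use FL0 FLb in \<open>auto intro!: power_mono\<close>)
    have intA: "integrable lebesgue (\<lambda>x. indicator (cball (0::'a) 1) x * (\<alpha> + \<beta> * H x))" for \<alpha> \<beta>
      by (rule integrable_ball[where B="\<bar>\<alpha>\<bar> + \<bar>\<beta>\<bar> * D"])
         (measurable, use Hb in \<open>auto intro!: order_trans[OF abs_triangle_ineq] add_mono mult_left_mono simp: abs_mult\<close>)
    have U: "vol (parallel_body K t) \<le> (t ^ Suc m + C1 * t ^ m / t) * \<omega> + real (Suc m) * t ^ m * Jf K"
    proof -
      have "(\<integral>x. indicator (cball 0 1) x * FU x ^ DIM('a) \<partial>lebesgue)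
          \<le> (\<integral>x. indicator (cball (0::'a) 1) x * ((t ^ Suc m + C1 * t ^ m / t) + real (Suc m) * t ^ m * H x) \<partial>lebesgue)"
      proof (rule Bochner_Integration.integral_mono[OF intU intA])
        fix x :: 'a
        have "FU x ^ DIM('a) \<le> (t ^ Suc m + C1 * t ^ m / t) + real (Suc m) * t ^ m * H x"
          unfolding dm by (rule ptU)
        then show "indicator (cball 0 1) x * FU x ^ DIM('a) \<le> indicator (cball 0 1) x * ((t ^ Suc m + C1 * t ^ m / t) + real (Suc m) * t ^ m * H x)"
          by (rule mult_left_mono) simp
      qed
      also have "\<dots> = (t ^ Suc m + C1 * t ^ m / t) * \<omega> + real (Suc m) * t ^ m * Jf K"
        unfolding int_affine_ball[OF Hint] J \<omega>_def ..
      finally show ?thesis using v1 pU by simp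
    qed
    have L: "(t ^ Suc m - real (Suc m) * t ^ m * (D\<^sup>2 / t) - C2 * t ^ m / t) * \<omega> + real (Suc m) * t ^ m * Jf K \<le> vol (parallel_body K t)"
    proof -
      have "(t ^ Suc m - real (Suc m) * t ^ m * (D\<^sup>2 / t) - C2 * t ^ m / t) * \<omega> + real (Suc m) * t ^ m * Jf K
          = (\<integral>x. indicator (cball (0::'a) 1) x * ((t ^ Suc m - real (Suc m) * t ^ m * (D\<^sup>2 / t) - C2 * t ^ m / t) + real (Suc m) * t ^ m * H x) \<partial>lebesgue)"
        unfolding int_affine_ball[OF Hint] J \<omega>_def ..
      also have "\<dots> \<le> (\<integral>x. indicator (cball 0 1) x * FL x ^ DIM('a) \<partial>lebesgue)"
      proof (rule Bochner_Integration.integral_mono[OF intA intL])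
        fix x :: 'a
        have "(t ^ Suc m - real (Suc m) * t ^ m * (D\<^sup>2 / t) - C2 * t ^ m / t) + real (Suc m) * t ^ m * H x \<le> FL x ^ DIM('a)"
          unfolding dm by (rule ptL)
        then show "indicator (cball 0 1) x * ((t ^ Suc m - real (Suc m) * t ^ m * (D\<^sup>2 / t) - C2 * t ^ m / t) + real (Suc m) * t ^ m * H x) \<le> indicator (cball 0 1) x * FL x ^ DIM('a)"
          by (rule mult_left_mono) simp
      qed
      finally show ?thesis using v2 pL by simp
    qed
    have e1: "real (Suc m) * t ^ m * (D\<^sup>2 / t) * \<omega> = real (Suc m) * D\<^sup>2 * \<omega> * t ^ m / t" by simp
    have "C1 * t ^ m / t * \<omega> \<le> Q * t ^ m / t"
    proof -
      have "C1 * \<omega> \<le> Q" unfolding Q_def using C2 \<omega>0 by (simp add: algebra_simps)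
      then have "C1 * \<omega> * (t ^ m / t) \<le> Q * (t ^ m / t)" using t1 by (intro mult_right_mono) auto
      then show ?thesis by (simp add: mult.commute mult.left_commute)
    qed
    moreover have "(real (Suc m) * D\<^sup>2 + C2) * \<omega> * (t ^ m / t) \<le> Q * (t ^ m / t)"
    proof -
      have "(real (Suc m) * D\<^sup>2 + C2) * \<omega> \<le> Q" unfolding Q_def using C1 \<omega>0 by (simp add: algebra_simps)
      then show ?thesis using t1 by (intro mult_right_mono) auto
    qed
    ultimately show ?thesis using U L by (simp add: abs_le_iff algebra_simps)
  qed
  show ?thesis
  proof (rule that[OF Q0])
    fix t assume "t \<ge> 2 * D"
    from main[OF this] show "\<bar>vol (parallel_body K t) - omega DIM('a) * t ^ DIM('a) - real DIM('a) * t ^ (DIM('a) - 1) * Jf K\<bar>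
        \<le> Q * t ^ (DIM('a) - 1) / t" by (simp add: dm \<omega>)
  qed
qed

lemma alg_div: "(w::real) \<noteq> 0 \<Longrightarrow> p \<noteq> 0 \<Longrightarrow> (V - A) / (w * p) - c * J / w = (V - A - c * p * J) / (w * p)"
  by (simp add: field_simps)

lemma V1_formula:
  fixes K :: "'a::euclidean_space set"
  assumes K: "compact K" "K \<noteq> {}"
  shows "V1 K = real DIM('a) * Jf K / omega (DIM('a) - 1)"
proof -
  obtain D0 where D0: "D0 > 0" "\<And>k. k \<in> K \<Longrightarrow> norm k \<le> D0"
    using compact_imp_bounded[OF K(1)] by (meson bounded_pos)
  define D where "D = max D0 1"
  have Dk: "\<And>k. k \<in> K \<Longrightarrow> norm k \<le> D" using D0 unfolding D_def by (meson max.coboundedI1)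
  have D1: "D \<ge> 1" unfolding D_def by simp
  obtain Q where Q: "Q \<ge> 0" "\<And>t. t \<ge> 2 * D \<Longrightarrow>
      \<bar>vol (parallel_body K t) - omega DIM('a) * t ^ DIM('a) - real DIM('a) * t ^ (DIM('a) - 1) * Jf K\<bar>
        \<le> Q * t ^ (DIM('a) - 1) / t"
    using vol_pb_bounds[OF K Dk D1] by blast
  define w where "w = omega (DIM('a) - 1)"
  have w: "w > 0" unfolding w_def by (rule omega_pos)
  define f where "f n = (vol (parallel_body K (real n)) - omega DIM('a) * real n ^ DIM('a))
      / (omega (DIM('a) - 1) * real n ^ (DIM('a) - 1))" for n :: nat
  define L where "L = real DIM('a) * Jf K / w"
  have ev: "eventually (\<lambda>n. norm (f n - L) \<le> (Q / w) / real n) sequentially"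
    using eventually_ge_at_top[of "nat \<lceil>2 * D\<rceil>"]
  proof eventually_elim
    case (elim n)
    then have tn: "real n \<ge> 2 * D" by linarith
    then have n0: "real n > 0" using D1 by linarith
    define X where "X = vol (parallel_body K (real n)) - omega DIM('a) * real n ^ DIM('a) - real DIM('a) * real n ^ (DIM('a) - 1) * Jf K"
    have pn: "real n ^ (DIM('a) - 1) > 0" using n0 by simp
    have "f n - L = X / (w * real n ^ (DIM('a) - 1))"
      unfolding f_def L_def X_def w_def[symmetric] by (rule alg_div) (use w pn in auto)
    then have "norm (f n - L) = \<bar>X\<bar> / (w * real n ^ (DIM('a) - 1))" using w pn by simp
    also have "\<dots> \<le> (Q * real n ^ (DIM('a) - 1) / real n) / (w * real n ^ (DIM('a) - 1))"
      using Q(2)[OF tn] w pn unfolding X_def by (intro divide_right_mono) auto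
    also have "\<dots> = (Q / w) / real n" using w pn n0 by (simp add: field_simps)
    finally show ?case .
  qed
  have "(\<lambda>n. f n - L) \<longlonglongrightarrow> 0"
    by (rule Lim_null_comparison[OF ev lim_const_over_n])
  then have "f \<longlonglongrightarrow> L" by (simp add: LIM_zero_iff)
  then have "lim f = L" by (rule limI)
  then show ?thesis unfolding V1_def f_def L_def w_def by simp
qed

lemma vol_uminus: "vol (uminus ` S) = vol (S :: 'a::euclidean_space set)"
proof -
  have "uminus ` S = (\<lambda>x. (-1) *\<^sub>R x + 0) ` S" by simp
  then show ?thesis unfolding vol_def using measure_lebesgue_affine[of "-1" 0 S] by simp
qed

lemma pb_uminus: "parallel_body (uminus ` K) t = uminus ` parallel_body K t"
  unfolding parallel_body_def
proof (rule set_eqI, rule iffI)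
  fix z assume "z \<in> {x + y |x y. x \<in> uminus ` K \<and> y \<in> cball 0 t}"
  then obtain k y where "z = - k + y" "k \<in> K" "y \<in> cball 0 t" by auto
  then have "z = - (k + (- y))" "- y \<in> cball 0 t" by auto
  then show "z \<in> uminus ` {x + y |x y. x \<in> K \<and> y \<in> cball 0 t}" using \<open>k \<in> K\<close> by blast
next
  fix z assume "z \<in> uminus ` {x + y |x y. x \<in> K \<and> y \<in> cball 0 t}"
  then obtain k y where "z = - (k + y)" "k \<in> K" "y \<in> cball 0 t" by auto
  then have "z = - k + (- y)" "- y \<in> cball 0 t" "- k \<in> uminus ` K" by auto
  then show "z \<in> {x + y |x y. x \<in> uminus ` K \<and> y \<in> cball 0 t}" by blast
qed

lemma V1_uminus: "V1 (uminus ` K) = V1 (K :: 'a::euclidean_space set)"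
  unfolding V1_def pb_uminus vol_uminus ..

lemma hsupp_uminus: "hsupp (uminus ` S) u = hsupp S (- u)"
  unfolding hsupp_def image_image by simp

lemma AE_nonzero: "AE x in lebesgue. x \<noteq> (0::'a::euclidean_space)"
proof -
  have "{0::'a} \<in> null_sets lebesgue" by simp
  from AE_not_in[OF this] show ?thesis by simp
qed

lemma V1_dual_sum:
  fixes X :: "'a::euclidean_space set"
  assumes r: "r > 0" and X: "X \<noteq> {}" and A: "A = ball_dual r X" "A \<noteq> {}"
  shows "V1 A + V1 (ball_dual r A) = real DIM('a) * omega DIM('a) / omega (DIM('a) - 1) * r"
proof -
  define Ar where "Ar = ball_dual r A"
  define B' where "B' = uminus ` Ar"
  have cA: "compact A" using A X by (simp add: ball_dual_compact)
  have cAr: "compact Ar" unfolding Ar_def using A by (simp add: ball_dual_compact)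
  have Arne: "Ar \<noteq> {}" unfolding Ar_def using ball_dual_sub[of X r] X A by auto
  have cB: "compact B'" unfolding B'_def using cAr by (simp add: compact_negations)
  have Bne: "B' \<noteq> {}" unfolding B'_def using Arne by simp
  have V1r: "V1 Ar = V1 B'" unfolding B'_def by (rule V1_uminus[symmetric])
  have int1: "integrable lebesgue (\<lambda>x. indicator (cball (0::'a) 1) x * hsupp S (sgn x))"
    if S: "compact S" "S \<noteq> {}" for S :: "'a set"
  proof -
    obtain D where D: "D > 0" "\<And>k. k \<in> S \<Longrightarrow> norm k \<le> D"
      using compact_imp_bounded[OF S(1)] by (meson bounded_pos)
    have "\<bar>hsupp S (sgn x)\<bar> \<le> D" for x
    proof -
      have "\<bar>hsupp S (sgn x)\<bar> \<le> D * norm (sgn x)" by (rule hsupp_bound[OF S D(2)])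
      also have "\<dots> \<le> D * 1" using D by (intro mult_left_mono) (auto simp: norm_sgn)
      finally show ?thesis by simp
    qed
    then show ?thesis by (intro integrable_ball[OF H_meas[OF S]])
  qed
  have [measurable]: "(\<lambda>x. hsupp A (sgn x)) \<in> borel_measurable lebesgue" by (rule H_meas[OF cA A(2)])
  have [measurable]: "(\<lambda>x. hsupp B' (sgn x)) \<in> borel_measurable lebesgue" by (rule H_meas[OF cB Bne])
  have [measurable]: "cball (0::'a) 1 \<in> sets lebesgue" by simp
  have "Jf A + Jf B' = (\<integral>x. indicator (cball (0::'a) 1) x * hsupp A (sgn x) + indicator (cball (0::'a) 1) x * hsupp B' (sgn x) \<partial>lebesgue)"
    unfolding Jf_def by (rule Bochner_Integration.integral_add[symmetric, OF int1[OF cA A(2)] int1[OF cB Bne]])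
  also have "\<dots> = (\<integral>x. r * indicator (cball (0::'a) 1) x \<partial>lebesgue)"
  proof (rule integral_cong_AE)
    show "AE x in lebesgue. indicator (cball (0::'a) 1) x * hsupp A (sgn x) + indicator (cball 0 1) x * hsupp B' (sgn x)
        = r * indicator (cball (0::'a) 1) x"
      using AE_nonzero
    proof eventually_elim
      case (elim x)
      then have u: "norm (sgn x) = 1" by (simp add: norm_sgn)
      have "hsupp A (sgn x) + hsupp B' (sgn x) = r"
        unfolding B'_def hsupp_uminus Ar_def by (rule hsupp_dual[OF r X A u])
      then show ?case by (simp add: algebra_simps indicator_def)
    qed
  qed measurable
  also have "\<dots> = r * omega DIM('a)"
    unfolding integral_mult_right_zero integral_indicator using omega_ball[where 'a='a] by simp
  finally have J: "Jf A + Jf B' = r * omega DIM('a)" .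
  have "V1 A + V1 Ar = real DIM('a) * Jf A / omega (DIM('a) - 1) + real DIM('a) * Jf B' / omega (DIM('a) - 1)"
    unfolding V1r V1_formula[OF cA A(2)] V1_formula[OF cB Bne] ..
  also have "\<dots> = real DIM('a) * (Jf A + Jf B') / omega (DIM('a) - 1)" by (simp add: add_divide_distrib distrib_left)
  also have "\<dots> = real DIM('a) * omega DIM('a) / omega (DIM('a) - 1) * r" unfolding J by simp
  finally show ?thesis unfolding Ar_def .
qed

lemma vol_cball_pos: "\<rho> > 0 \<Longrightarrow> vol (cball (0::'a::euclidean_space) \<rho>) > 0"
proof -
  assume "\<rho> > 0"
  have "vol (cball (0::'a) \<rho>) = measure lborel (cball (0::'a) \<rho>)"
    unfolding vol_def by (rule measure_completion) simp
  then show ?thesis using \<open>\<rho> > 0\<close> by simp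
qed

theorem corollary1:
  fixes X :: "'a::euclidean_space set" and r R :: real and A B :: "'a set"
  assumes "DIM('a) > 1" and "r > 0" and "X \<noteq> {}"
    and "A = ball_dual r X"
    and "0 < R" and "R < r"
    and "B = cball 0 (r - R)"
    and "vol A = vol B"
  shows "ball_dual r B = cball 0 R \<and>
         V1 A + V1 (ball_dual r A) = real DIM('a) * omega DIM('a) / omega (DIM('a) - 1) * r \<and>
         real DIM('a) * omega DIM('a) / omega (DIM('a) - 1) * r = V1 B + V1 (ball_dual r B)"
proof (intro conjI)
  have BR: "ball_dual r B = cball 0 R"
    using ball_dual_cball[of "r - R" r] assms(5,6,7) by simp
  then show "ball_dual r B = cball 0 R" .
  have "A \<noteq> {}"
  proof
    assume "A = {}"
    then have "vol B = 0" using assms(8) by (simp add: vol_def)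
    moreover have "vol B > 0" using assms(6,7) vol_cball_pos[of "r - R"] by simp
    ultimately show False by simp
  qed
  then show "V1 A + V1 (ball_dual r A) = real DIM('a) * omega DIM('a) / omega (DIM('a) - 1) * r"
    using V1_dual_sum[OF assms(2,3,4)] by blast
  have bd: "ball_dual r (cball 0 R) = cball (0::'a) (r - R)"
    by (rule ball_dual_cball) (use assms(5,6) in auto)
  have B2: "B = ball_dual r (cball 0 R)"
    unfolding bd by (rule assms(7))
  have "B \<noteq> {}" using assms(5,6,7) by simp
  from V1_dual_sum[OF assms(2) _ B2 this] show "real DIM('a) * omega DIM('a) / omega (DIM('a) - 1) * r = V1 B + V1 (ball_dual r B)"
    using assms(5) by simp
qed

end
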